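(* Let $n\ge 2$ and let $\sigma_{n-1}\in G_n$ be the automorphism with $\sigma_{n-1}(y_{n-1}y_n)=-y_{n-1}y_n$ and $\sigma_{n-1}(y_jy_{j+1})=y_jy_{j+1}$ for $1\le j\le n-2$. Then $(\mathrm{EC}_n-1)(\sigma_{n-1}(\mathrm{EC}_n)-1)=(x_n-\mathrm{EC}_{n-1}(x_1,\dots,x_{n-1}))^2$. In particular $\mathrm{EC}_n=1$ implies $x_n=\mathrm{EC}_{n-1}(x_1,\dots,x_{n-1})$.
   Context: Let $x_1,\dots,x_n$ be algebraically independent indeterminates over $\mathbb{Q}$; in an algebraic closure fix $y_j$ with $y_j^2=1-x_j^2$. For indices $i_1<\dots<i_m$, $\mathrm{EC}_m(x_{i_1},\dots,x_{i_m})=\sum_{S\subseteq\{i_1,\dots,i_m\},\ |S|\text{ even}}(-1)^{|S|/2}\prod_{j\in S}y_j\prod_{j\notin S}x_j$, and $\mathrm{EC}_n=\mathrm{EC}_n(x_1,\dots,x_n)$. $G_n$ is the Galois group of $\mathbb{Q}(x_1,\dots,x_n,\ y_iy_j:1\le i<j\le n)$ over $\mathbb{Q}(x_1,\dots,x_n)$. *)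

theory Defs
  imports Complex_Main "HOL-Library.Poly_Mapping"
begin

definition mpoly_eval :: "((nat \<Rightarrow>\<^sub>0 nat) \<Rightarrow>\<^sub>0 rat) \<Rightarrow> (nat \<Rightarrow> 'a::field_char_0) \<Rightarrow> 'a" where
  "mpoly_eval p x = (\<Sum>m\<in>Poly_Mapping.keys p. of_rat (Poly_Mapping.lookup p m) * (\<Prod>i\<in>Poly_Mapping.keys m. x i ^ Poly_Mapping.lookup m i))"

definition alg_indep :: "(nat \<Rightarrow> 'a::field_char_0) \<Rightarrow> nat set \<Rightarrow> bool" where
  "alg_indep x I \<longleftrightarrow> inj_on x I \<and>
     (\<forall>p. (\<forall>m\<in>Poly_Mapping.keys p. Poly_Mapping.keys m \<subseteq> I) \<and> mpoly_eval p x = 0 \<longrightarrow> p = 0)"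

inductive_set gen_field :: "'a::field set \<Rightarrow> 'a set" for S where
  gen_base: "a \<in> S \<Longrightarrow> a \<in> gen_field S"
| gen_zero: "0 \<in> gen_field S"
| gen_one: "1 \<in> gen_field S"
| gen_add: "a \<in> gen_field S \<Longrightarrow> b \<in> gen_field S \<Longrightarrow> a + b \<in> gen_field S"
| gen_uminus: "a \<in> gen_field S \<Longrightarrow> - a \<in> gen_field S"
| gen_mult: "a \<in> gen_field S \<Longrightarrow> b \<in> gen_field S \<Longrightarrow> a * b \<in> gen_field S"
| gen_inverse: "a \<in> gen_field S \<Longrightarrow> inverse a \<in> gen_field S"

definition base_field :: "(nat \<Rightarrow> 'a::field) \<Rightarrow> nat \<Rightarrow> 'a set" where
  "base_field x n = gen_field (x ` {1..n})"

definition L_field :: "(nat \<Rightarrow> 'a::field) \<Rightarrow> (nat \<Rightarrow> 'a) \<Rightarrow> nat \<Rightarrow> 'a set" where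
  "L_field x y n = gen_field (x ` {1..n} \<union> {y i * y j | i j. 1 \<le> i \<and> i < j \<and> j \<le> n})"

text \<open>G_n: automorphisms of L_n fixing Q(x_1,...,x_n) pointwise (as functions on the
  ambient field; only their values on L_n matter).\<close>
definition G_n :: "(nat \<Rightarrow> 'a::field) \<Rightarrow> (nat \<Rightarrow> 'a) \<Rightarrow> nat \<Rightarrow> ('a \<Rightarrow> 'a) set" where
  "G_n x y n = {\<sigma>. bij_betw \<sigma> (L_field x y n) (L_field x y n)
      \<and> (\<forall>a\<in>L_field x y n. \<forall>b\<in>L_field x y n. \<sigma> (a + b) = \<sigma> a + \<sigma> b \<and> \<sigma> (a * b) = \<sigma> a * \<sigma> b)
      \<and> (\<forall>z\<in>base_field x n. \<sigma> z = z)}"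

definition EC :: "(nat \<Rightarrow> 'a::comm_ring_1) \<Rightarrow> (nat \<Rightarrow> 'a) \<Rightarrow> nat set \<Rightarrow> 'a" where
  "EC x y I = (\<Sum>S\<in>{S. S \<subseteq> I \<and> even (card S)}.
      (-1) ^ (card S div 2) * (\<Prod>j\<in>S. y j) * (\<Prod>j\<in>I - S. x j))"

end

theory Submission imports Defs begin


lemma y_nonzero:
  fixes x y :: "nat \<Rightarrow> 'a::field_char_0"
  assumes "alg_indep x I" "c \<in> I" "(y c)\<^sup>2 = 1 - (x c)\<^sup>2"
  shows "y c \<noteq> 0"
proof
  assume y0: "y c = 0"
  define m :: "nat \<Rightarrow>\<^sub>0 nat" where "m = Poly_Mapping.single c 2"
  define p :: "(nat \<Rightarrow>\<^sub>0 nat) \<Rightarrow>\<^sub>0 rat" where "p = Poly_Mapping.single m 1 + Poly_Mapping.single 0 (-1)"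
  have m0: "m \<noteq> 0" unfolding m_def by (metis lookup_single_eq lookup_zero zero_neq_numeral)
  have km: "Poly_Mapping.keys m = {c}" unfolding m_def by simp
  have lp1: "Poly_Mapping.lookup p m = 1" using m0 unfolding p_def
    by (simp add: lookup_add lookup_single)
  have lp0: "Poly_Mapping.lookup p 0 = -1" using m0 unfolding p_def
    by (simp add: lookup_add lookup_single)
  have kp: "Poly_Mapping.keys p = {m, 0}"
  proof
    show "Poly_Mapping.keys p \<subseteq> {m, 0}"
      unfolding p_def using keys_add[of "Poly_Mapping.single m (1::rat)" "Poly_Mapping.single 0 (-1)"] by auto
    show "{m, 0} \<subseteq> Poly_Mapping.keys p" using lp1 lp0 by (auto simp: in_keys_iff)
  qed
  have "mpoly_eval p x = (x c)^2 - 1"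
    unfolding mpoly_eval_def kp using m0 lp1 lp0 km
    by (simp add: m_def)
  also have "\<dots> = 0" using assms(3) y0 by simp
  finally have "p = 0" using assms(1) km kp \<open>c \<in> I\<close> unfolding alg_indep_def by auto
  then show False using lp1 by simp
qed



definition OC :: "(nat \<Rightarrow> 'a::comm_ring_1) \<Rightarrow> (nat \<Rightarrow> 'a) \<Rightarrow> nat set \<Rightarrow> 'a" where
  "OC x y I = (\<Sum>S\<in>{S. S \<subseteq> I \<and> odd (card S)}.
      (-1) ^ (card S div 2) * (\<Prod>j\<in>S. y j) * (\<Prod>j\<in>I - S. x j))"

lemma split_subsets:
  assumes "finite I" "k \<notin> I"
  shows "sum f {S. S \<subseteq> insert k I \<and> P (card S)} =
         sum f {S. S \<subseteq> I \<and> P (card S)} + sum (\<lambda>S. f (insert k S)) {S. S \<subseteq> I \<and> P (Suc (card S))}"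
proof -
  have eq: "{S. S \<subseteq> insert k I \<and> P (card S)} =
        {S. S \<subseteq> I \<and> P (card S)} \<union> insert k ` {S. S \<subseteq> I \<and> P (Suc (card S))}"
  proof (intro equalityI subsetI)
    fix S assume "S \<in> {S. S \<subseteq> insert k I \<and> P (card S)}"
    then have S: "S \<subseteq> insert k I" "P (card S)" by auto
    have fS: "finite S" using S(1) assms(1) finite_subset by blast
    show "S \<in> {S. S \<subseteq> I \<and> P (card S)} \<union> insert k ` {S. S \<subseteq> I \<and> P (Suc (card S))}"
    proof (cases "k \<in> S")
      case True
      have "S = insert k (S - {k})" using True by auto
      moreover have "card S = Suc (card (S - {k}))" using True fS
        by (metis card_Suc_Diff1)
      ultimately show ?thesis using S by (auto intro!: image_eqI[of _ _ "S - {k}"])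
    next
      case False then show ?thesis using S by auto
    qed
  next
    fix S assume "S \<in> {S. S \<subseteq> I \<and> P (card S)} \<union> insert k ` {S. S \<subseteq> I \<and> P (Suc (card S))}"
    then show "S \<in> {S. S \<subseteq> insert k I \<and> P (card S)}"
    proof
      assume "S \<in> {S. S \<subseteq> I \<and> P (card S)}" then show ?thesis by auto
    next
      assume "S \<in> insert k ` {S. S \<subseteq> I \<and> P (Suc (card S))}"
      then obtain T where T: "S = insert k T" "T \<subseteq> I" "P (Suc (card T))" by auto
      have "finite T" using T(2) assms(1) finite_subset by blast
      moreover have "k \<notin> T" using T(2) assms(2) by auto
      ultimately show ?thesis using T by auto
    qed
  qed
  have fin: "finite {S. S \<subseteq> I'}" if "finite I'" for I' 
    using that by simp
  have f1: "finite {S. S \<subseteq> I \<and> P (card S)}"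
    by (rule finite_subset[OF _ fin[OF assms(1)]]) auto
  have f2: "finite (insert k ` {S. S \<subseteq> I \<and> P (Suc (card S))})"
    by (rule finite_imageI, rule finite_subset[OF _ fin[OF assms(1)]]) auto
  have disj: "{S. S \<subseteq> I \<and> P (card S)} \<inter> insert k ` {S. S \<subseteq> I \<and> P (Suc (card S))} = {}"
    using assms(2) by auto
  have inj: "inj_on (insert k) {S. S \<subseteq> I \<and> P (Suc (card S))}"
    unfolding inj_on_def using assms(2) by (metis (no_types, lifting) insert_ident mem_Collect_eq subsetD)
  show ?thesis unfolding eq
    by (simp add: sum.union_disjoint[OF f1 f2 disj] sum.reindex[OF inj])
qed

lemma EC_insert:
  fixes x y :: "nat \<Rightarrow> 'a::comm_ring_1"
  assumes "finite I" "k \<notin> I"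
  shows "EC x y (insert k I) = EC x y I * x k - OC x y I * y k"
proof -
  have A: "(-1) ^ (card S div 2) * (\<Prod>j\<in>S. y j) * (\<Prod>j\<in>insert k I - S. x j)
      = ((-1) ^ (card S div 2) * (\<Prod>j\<in>S. y j) * (\<Prod>j\<in>I - S. x j)) * x k"
    if "S \<in> {S. S \<subseteq> I \<and> even (card S)}" for S
  proof -
    have "insert k I - S = insert k (I - S)" using that assms(2) by auto
    then have "(\<Prod>j\<in>insert k I - S. x j) = x k * (\<Prod>j\<in>I - S. x j)"
      using assms by simp
    then show ?thesis by (simp add: algebra_simps)
  qed
  have B: "(-1) ^ (card (insert k S) div 2) * (\<Prod>j\<in>insert k S. y j) * (\<Prod>j\<in>insert k I - insert k S. x j)
      = - (((-1) ^ (card S div 2) * (\<Prod>j\<in>S. y j) * (\<Prod>j\<in>I - S. x j)) * y k)"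
    if "S \<in> {S. S \<subseteq> I \<and> even (Suc (card S))}" for S
  proof -
    have S: "S \<subseteq> I" "odd (card S)" using that by auto
    have fS: "finite S" using S(1) assms(1) finite_subset by blast
    have kS: "k \<notin> S" using S assms by auto
    have ci: "card (insert k S) = Suc (card S)" using fS kS by simp
    have c: "Suc (card S) div 2 = Suc (card S div 2)" using S(2)
      by presburger
    have d: "insert k I - insert k S = I - S" using kS assms(2) by auto
    show ?thesis using fS kS by (simp add: c d algebra_simps)
  qed
  have e: "{S. S \<subseteq> I \<and> even (Suc (card S))} = {S. S \<subseteq> I \<and> odd (card S)}" by simp
  have "EC x y (insert k I) = (\<Sum>S\<in>{S. S \<subseteq> I \<and> even (card S)}. (-1) ^ (card S div 2) * (\<Prod>j\<in>S. y j) * (\<Prod>j\<in>insert k I - S. x j))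
     + (\<Sum>S\<in>{S. S \<subseteq> I \<and> even (Suc (card S))}. (-1) ^ (card (insert k S) div 2) * (\<Prod>j\<in>insert k S. y j) * (\<Prod>j\<in>insert k I - insert k S. x j))"
    unfolding EC_def by (rule split_subsets[OF assms])
  also have "\<dots> = (\<Sum>S\<in>{S. S \<subseteq> I \<and> even (card S)}. ((-1) ^ (card S div 2) * (\<Prod>j\<in>S. y j) * (\<Prod>j\<in>I - S. x j)) * x k)
     + (\<Sum>S\<in>{S. S \<subseteq> I \<and> even (Suc (card S))}. - (((-1) ^ (card S div 2) * (\<Prod>j\<in>S. y j) * (\<Prod>j\<in>I - S. x j)) * y k))"
    using A B by (intro arg_cong2[where f="(+)"] sum.cong) auto
  also have "\<dots> = EC x y I * x k - OC x y I * y k"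
    unfolding e EC_def OC_def by (simp add: sum_distrib_right sum_negf)
  finally show ?thesis .

qed

lemma OC_insert:
  fixes x y :: "nat \<Rightarrow> 'a::comm_ring_1"
  assumes "finite I" "k \<notin> I"
  shows "OC x y (insert k I) = OC x y I * x k + EC x y I * y k"
proof -
  have A: "(-1) ^ (card S div 2) * (\<Prod>j\<in>S. y j) * (\<Prod>j\<in>insert k I - S. x j)
      = ((-1) ^ (card S div 2) * (\<Prod>j\<in>S. y j) * (\<Prod>j\<in>I - S. x j)) * x k"
    if "S \<in> {S. S \<subseteq> I \<and> odd (card S)}" for S
  proof -
    have "insert k I - S = insert k (I - S)" using that assms(2) by auto
    then have "(\<Prod>j\<in>insert k I - S. x j) = x k * (\<Prod>j\<in>I - S. x j)"
      using assms by simp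
    then show ?thesis by (simp add: algebra_simps)
  qed
  have B: "(-1) ^ (card (insert k S) div 2) * (\<Prod>j\<in>insert k S. y j) * (\<Prod>j\<in>insert k I - insert k S. x j)
      = (((-1) ^ (card S div 2) * (\<Prod>j\<in>S. y j) * (\<Prod>j\<in>I - S. x j)) * y k)"
    if "S \<in> {S. S \<subseteq> I \<and> odd (Suc (card S))}" for S
  proof -
    have S: "S \<subseteq> I" "even (card S)" using that by auto
    have fS: "finite S" using S(1) assms(1) finite_subset by blast
    have kS: "k \<notin> S" using S assms by auto
    have ci: "card (insert k S) = Suc (card S)" using fS kS by simp
    have c: "Suc (card S) div 2 = card S div 2" using S(2)
      by presburger
    have d: "insert k I - insert k S = I - S" using kS assms(2) by auto
    show ?thesis using fS kS by (simp add: c d algebra_simps)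
  qed
  have e: "odd (Suc c) = even c" for c :: nat by simp
  have e: "{S. S \<subseteq> I \<and> odd (Suc (card S))} = {S. S \<subseteq> I \<and> even (card S)}" by simp
  have "OC x y (insert k I) = (\<Sum>S\<in>{S. S \<subseteq> I \<and> odd (card S)}. (-1) ^ (card S div 2) * (\<Prod>j\<in>S. y j) * (\<Prod>j\<in>insert k I - S. x j))
     + (\<Sum>S\<in>{S. S \<subseteq> I \<and> odd (Suc (card S))}. (-1) ^ (card (insert k S) div 2) * (\<Prod>j\<in>insert k S. y j) * (\<Prod>j\<in>insert k I - insert k S. x j))"
    unfolding OC_def by (rule split_subsets[OF assms])
  also have "\<dots> = (\<Sum>S\<in>{S. S \<subseteq> I \<and> odd (card S)}. ((-1) ^ (card S div 2) * (\<Prod>j\<in>S. y j) * (\<Prod>j\<in>I - S. x j)) * x k)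
     + (\<Sum>S\<in>{S. S \<subseteq> I \<and> odd (Suc (card S))}. (((-1) ^ (card S div 2) * (\<Prod>j\<in>S. y j) * (\<Prod>j\<in>I - S. x j)) * y k))"
    using A B by (intro arg_cong2[where f="(+)"] sum.cong) auto
  also have "\<dots> = OC x y I * x k + EC x y I * y k"
    unfolding e EC_def OC_def by (simp add: sum_distrib_right)
  finally show ?thesis .

qed

lemma EC_empty: "EC x y {} = 1"
proof -
  have e: "{S. S \<subseteq> {} \<and> even (card S)} = {{}}" by auto
  show ?thesis unfolding EC_def e by simp
qed

lemma OC_empty: "OC x y {} = 0"
proof -
  have e: "{S. S \<subseteq> {} \<and> odd (card S)} = {}" by auto
  show ?thesis unfolding OC_def e by simp
qed

lemma EC_OC_sq:
  fixes x y :: "nat \<Rightarrow> 'a::comm_ring_1"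
  assumes "finite I"
  shows "(EC x y I)^2 + (OC x y I)^2 = (\<Prod>j\<in>I. (x j)^2 + (y j)^2)"
  using assms
proof (induction I rule: finite_induct)
  case empty then show ?case by (simp add: EC_empty OC_empty)
next
  case (insert k I)
  have "(EC x y I * x k - OC x y I * y k)^2 + (OC x y I * x k + EC x y I * y k)^2
     = ((EC x y I)^2 + (OC x y I)^2) * ((x k)^2 + (y k)^2)" by (simp add: power2_eq_square algebra_simps)
  then show ?case using insert by (simp add: EC_insert OC_insert mult.commute)
qed

lemma EC_cong:
  assumes "\<forall>j\<in>I. y j = y' j"
  shows "EC x y I = EC x y' I" "OC x y I = OC x y' I"
proof -
  have "prod y S = prod y' S" if "S \<subseteq> I" for S using that assms by (auto intro!: prod.cong)
  then show "EC x y I = EC x y' I" "OC x y I = OC x y' I"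
    unfolding EC_def OC_def by (auto intro!: sum.cong)
qed



lemma gen_field_mono: "A \<subseteq> B \<Longrightarrow> gen_field A \<subseteq> gen_field B"
proof
  fix z assume AB: "A \<subseteq> B" and z: "z \<in> gen_field A"
  from z show "z \<in> gen_field B"
    by (induction rule: gen_field.induct) (use AB in \<open>auto intro: gen_field.intros\<close>)
qed

lemma gen_field_sum: "(\<forall>i\<in>A. f i \<in> gen_field G) \<Longrightarrow> sum f A \<in> gen_field G"
  by (induction A rule: infinite_finite_induct) (auto intro: gen_field.intros)

lemma gen_field_prod: "(\<forall>i\<in>A. f i \<in> gen_field G) \<Longrightarrow> prod f A \<in> gen_field G"
  by (induction A rule: infinite_finite_induct) (auto intro: gen_field.intros)

lemma gen_field_power: "a \<in> gen_field G \<Longrightarrow> a ^ k \<in> gen_field G"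
  by (induction k) (auto intro: gen_field.intros)

lemma gen_field_diff: "a \<in> gen_field G \<Longrightarrow> b \<in> gen_field G \<Longrightarrow> a - b \<in> gen_field G"
  using gen_field.gen_add[OF _ gen_field.gen_uminus, of a G b] by simp

lemma hom_sum:
  assumes hom: "\<forall>a\<in>L. \<forall>b\<in>L. \<sigma> (a + b) = \<sigma> a + \<sigma> b"
    and L: "L = gen_field G" and z: "\<sigma> 0 = 0"
    and f: "\<forall>i\<in>A. f i \<in> L"
  shows "\<sigma> (sum f A) = (\<Sum>i\<in>A. \<sigma> (f i))"
  using f
proof (induction A rule: infinite_finite_induct)
  case (insert i A)
  have "sum f A \<in> L" using insert gen_field_sum L by auto
  then show ?case using insert hom by auto
qed (use z in auto)



theorem mainTheorem7:
  fixes x y :: "nat \<Rightarrow> 'a::field_char_0" and n :: nat and \<sigma> :: "'a \<Rightarrow> 'a"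
  assumes "n \<ge> 2"
    and "alg_indep x {1..n}"
    and "\<forall>j\<in>{1..n}. (y j)\<^sup>2 = 1 - (x j)\<^sup>2"
    and "\<sigma> \<in> G_n x y n"
    and "\<sigma> (y (n - 1) * y n) = - (y (n - 1) * y n)"
    and "\<forall>j\<in>{1..n - 2}. \<sigma> (y j * y (j + 1)) = y j * y (j + 1)"
  shows "(EC x y {1..n} - 1) * (\<sigma> (EC x y {1..n}) - 1) = (x n - EC x y {1..n - 1})\<^sup>2
         \<and> (EC x y {1..n} = 1 \<longrightarrow> x n = EC x y {1..n - 1})"
proof -
  define L where "L = L_field x y n"
  define B where "B = base_field x n"
  define G where "G = x ` {1..n} \<union> {y i * y j | i j. 1 \<le> i \<and> i < j \<and> j \<le> n}"
  have LG: "L = gen_field G" unfolding L_def G_def L_field_def by simp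
  have BL: "B \<subseteq> L" unfolding B_def L_def base_field_def L_field_def
    by (rule gen_field_mono) auto
  have hom: "\<forall>a\<in>L. \<forall>b\<in>L. \<sigma> (a + b) = \<sigma> a + \<sigma> b \<and> \<sigma> (a * b) = \<sigma> a * \<sigma> b"
    using assms(4) unfolding G_n_def L_def by auto
  have hadd: "\<forall>a\<in>L. \<forall>b\<in>L. \<sigma> (a + b) = \<sigma> a + \<sigma> b" using hom by auto
  have hmul: "\<sigma> (a * b) = \<sigma> a * \<sigma> b" if "a \<in> L" "b \<in> L" for a b using hom that by auto
  have fixB: "\<sigma> z = z" if "z \<in> B" for z using assms(4) that unfolding G_n_def B_def by auto
  have xB: "x j \<in> B" if "j \<in> {1..n}" for j
    unfolding B_def base_field_def using that by (auto intro: gen_field.gen_base)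
  have yyL: "y i * y j \<in> L" if "1 \<le> i" "i < j" "j \<le> n" for i j
    unfolding LG G_def using that by (blast intro: gen_field.gen_base)
  have B0: "0 \<in> B" and B1: "1 \<in> B" and Bm1: "-1 \<in> B"
    unfolding B_def base_field_def by (auto intro: gen_field.intros)
  have s0: "\<sigma> 0 = 0" using fixB[OF B0] .
  have s1: "\<sigma> 1 = 1" using fixB[OF B1] .
  have L1: "1 \<in> L" using B1 BL by auto
  have ynz: "y c \<noteq> 0" if "c \<in> {1..n}" for c
    using y_nonzero[OF assms(2) that] assms(3) that by auto
  define s where "s b = (if b = n then -1 else (1::'a))" for b
  have sB: "s b \<in> B" for b unfolding s_def using B1 Bm1 by auto
  have adj: "\<sigma> (y a * y (a+1)) = s (a+1) * (y a * y (a+1))" if "1 \<le> a" "a + 1 \<le> n" for a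
  proof (cases "a + 1 = n")
    case True
    then have "a = n - 1" by auto
    then show ?thesis using assms(5) True unfolding s_def by simp
  next
    case False
    then have "a \<in> {1..n-2}" using that by auto
    then show ?thesis using assms(6) False unfolding s_def by simp
  qed
  have pair: "\<forall>a. 1 \<le> a \<and> a + d + 1 \<le> n \<longrightarrow> \<sigma> (y a * y (a+d+1)) = s (a+d+1) * (y a * y (a+d+1))" for d
  proof (induction d)
    case 0 then show ?case using adj by simp
  next
    case (Suc d)
    show ?case
    proof (intro allI impI)
      fix a assume a: "1 \<le> a \<and> a + Suc d + 1 \<le> n"
      define c where "c = a + d + 1"
      define b where "b = a + Suc d + 1"
      have bc: "b = c + 1" unfolding b_def c_def by simp
      have IH: "\<sigma> (y a * y c) = y a * y c" using Suc a unfolding c_def s_def by auto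
      have ad: "\<sigma> (y c * y b) = s b * (y c * y b)" using adj[of c] a unfolding bc c_def b_def by auto
      have c1: "c \<in> {1..n}" using a unfolding c_def by auto
      have yc2: "(y c)^2 = 1 - (x c)^2" using assms(3) c1 by auto
      have xcB: "1 - (x c)^2 \<in> B" unfolding B_def base_field_def
        using xB[OF c1] unfolding B_def base_field_def
        by (intro gen_field_diff gen_field_power) (auto intro: gen_field.intros)
      have L1: "y a * y c \<in> L" "y c * y b \<in> L" "y a * y b \<in> L"
        using a yyL unfolding b_def c_def by auto
      have eq: "(y a * y c) * (y c * y b) = (1 - (x c)^2) * (y a * y b)"
      proof -
        have "(y a * y c) * (y c * y b) = (y c)^2 * (y a * y b)" by (simp add: power2_eq_square algebra_simps)
        then show ?thesis using yc2 by simp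
      qed
      have sP: "\<sigma> ((y a * y c) * (y c * y b)) = (y a * y c) * (s b * (y c * y b))"
        using hmul[OF L1(1,2)] IH ad by simp
      have sQ: "\<sigma> ((1 - (x c)^2) * (y a * y b)) = (1 - (x c)^2) * \<sigma> (y a * y b)"
        using hmul[OF _ L1(3), of "1 - (x c)^2"] xcB BL fixB by auto
      have "(1 - (x c)^2) * \<sigma> (y a * y b) = \<sigma> ((1 - (x c)^2) * (y a * y b))" using sQ by simp
      also have "\<dots> = \<sigma> ((y a * y c) * (y c * y b))" by (simp only: eq)
      also have "\<dots> = s b * ((y a * y c) * (y c * y b))" unfolding sP by (simp add: algebra_simps)
      also have "\<dots> = s b * ((1 - (x c)^2) * (y a * y b))" by (simp only: eq)
      also have "\<dots> = (1 - (x c)^2) * (s b * (y a * y b))" by (simp add: algebra_simps)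
      finally have "(1 - (x c)^2) * \<sigma> (y a * y b) = (1 - (x c)^2) * (s b * (y a * y b))" .
      moreover have "1 - (x c)^2 \<noteq> 0" using ynz[OF c1] yc2 by (metis power_not_zero)
      ultimately show "\<sigma> (y a * y (a + Suc d + 1)) = s (a + Suc d + 1) * (y a * y (a + Suc d + 1))"
        unfolding b_def by simp
    qed
  qed
  have pair2: "\<sigma> (y a * y b) = s b * (y a * y b)" if "1 \<le> a" "a < b" "b \<le> n" for a b
    using pair[of "b - a - 1"] that by auto
  have evenprod: "T \<subseteq> {1..n} \<and> even (card T) \<longrightarrow> prod y T \<in> L \<and> \<sigma> (prod y T) = (if n \<in> T then -1 else 1) * prod y T" for T
  proof (induction "card T" arbitrary: T rule: less_induct)
    case less
    show ?case
    proof (intro impI)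
      assume T: "T \<subseteq> {1..n} \<and> even (card T)"
      have fT: "finite T" using T finite_subset by blast
      show "prod y T \<in> L \<and> \<sigma> (prod y T) = (if n \<in> T then -1 else 1) * prod y T"
      proof (cases "T = {}")
        case True then show ?thesis using L1 s1 by simp
      next
        case False
        define b where "b = Max T"
        have bT: "b \<in> T" unfolding b_def using fT False by simp
        have cT: "card T \<noteq> 0" using fT False by simp
        have cTb: "card (T - {b}) = card T - 1" using bT fT by simp
        have "card (T - {b}) \<noteq> 0" unfolding cTb using T cT by (metis One_nat_def diff_is_0_eq le_neq_implies_less less_one odd_one)
        then obtain a where aT: "a \<in> T - {b}" by (metis card.empty ex_in_conv)
        have ab: "a < b" using aT fT unfolding b_def
          by (metis DiffE Max_ge insertCI order_le_neq_trans)
        define T' where "T' = T - {a, b}"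
        have Teq: "T = insert a (insert b T')" using aT bT unfolding T'_def by auto
        have nin: "a \<notin> insert b T'" "b \<notin> T'" using ab unfolding T'_def by auto
        have fT': "finite T'" using fT unfolding T'_def by auto
        have cT': "card T = Suc (Suc (card T'))" using Teq nin fT' by (metis card_insert_disjoint finite_insert)
        have T'sub: "T' \<subseteq> {1..n}" using T unfolding T'_def by auto
        have IHT: "prod y T' \<in> L \<and> \<sigma> (prod y T') = (if n \<in> T' then -1 else 1) * prod y T'"
          using less[of T'] cT' T'sub T by auto
        have nT': "n \<notin> T'"
        proof
          assume "n \<in> T'"
          then have "n \<in> T" "n \<noteq> b" unfolding T'_def by auto
          moreover have "n \<le> b" using \<open>n \<in> T\<close> fT unfolding b_def by simp
          moreover have "b \<le> n" using bT T by auto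
          ultimately show False by simp
        qed
        have nTb: "(n \<in> T) = (b = n)"
        proof
          assume "n \<in> T"
          then have "n \<le> b" using fT unfolding b_def by simp
          then show "b = n" using bT T by auto
        qed (use bT in auto)
        have pT: "prod y T = (y a * y b) * prod y T'"
        proof -
          have "T = insert a (insert b T')" using aT bT unfolding T'_def by auto
          moreover have "a \<notin> insert b T'" "b \<notin> T'" using ab unfolding T'_def by auto
          moreover have "finite T'" using fT unfolding T'_def by auto
          ultimately show ?thesis by (simp add: mult.assoc)
        qed
        have an: "a \<in> {1..n}" "b \<in> {1..n}" using aT bT T by auto
        have abL: "y a * y b \<in> L" using yyL[of a b] ab an by auto
        have sab: "\<sigma> (y a * y b) = s b * (y a * y b)" using pair2[of a b] ab an by auto
        have inL: "prod y T \<in> L" unfolding pT LG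
          using abL IHT LG by (auto intro: gen_field.gen_mult)
        have "\<sigma> (prod y T) = s b * (y a * y b) * prod y T'"
          unfolding pT using hmul[OF abL] IHT nT' sab by simp
        also have "\<dots> = (if n \<in> T then -1 else 1) * prod y T"
          unfolding pT nTb s_def by simp
        finally show ?thesis using inL by simp
      qed
    qed
  qed
  define y' where "y' = y(n := - y n)"
  have Bm: "\<And>a. a \<in> B \<Longrightarrow> a \<in> L" using BL by auto
  have gB: "B = gen_field (x ` {1..n})" unfolding B_def base_field_def ..
  have termL: "(-1) ^ (card S div 2) * prod y S * prod x ({1..n} - S) \<in> L \<and>
     \<sigma> ((-1) ^ (card S div 2) * prod y S * prod x ({1..n} - S)) = (-1) ^ (card S div 2) * prod y' S * prod x ({1..n} - S)"
    if S: "S \<in> {S. S \<subseteq> {1..n} \<and> even (card S)}" for S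
  proof -
    have cB: "(-1::'a) ^ (card S div 2) \<in> B" unfolding gB
      by (rule gen_field_power) (auto intro: gen_field.intros)
    have XB: "prod x ({1..n} - S) \<in> B" unfolding gB
      by (rule gen_field_prod) (auto intro: gen_field.intros)
    have YS: "prod y S \<in> L" "\<sigma> (prod y S) = (if n \<in> S then -1 else 1) * prod y S"
      using evenprod[of S] S by auto
    have fS: "finite S" using S finite_subset by auto
    have Y': "prod y' S = (if n \<in> S then -1 else 1) * prod y S"
    proof (cases "n \<in> S")
      case True
      have "prod y' S = y' n * prod y' (S - {n})" using prod.remove[OF fS True] .
      moreover have "prod y S = y n * prod y (S - {n})" using prod.remove[OF fS True] .
      moreover have "prod y' (S - {n}) = prod y (S - {n})" unfolding y'_def by (auto intro: prod.cong)
      ultimately show ?thesis using True unfolding y'_def by simp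
    next
      case False
      then show ?thesis unfolding y'_def by (auto intro: prod.cong)
    qed
    have cYL: "(-1::'a) ^ (card S div 2) * prod y S \<in> L" unfolding LG
      using Bm[OF cB] YS(1) LG by (auto intro: gen_field.gen_mult)
    have inL: "(-1) ^ (card S div 2) * prod y S * prod x ({1..n} - S) \<in> L" unfolding LG
      using cYL Bm[OF XB] LG by (auto intro: gen_field.gen_mult)
    have "\<sigma> ((-1) ^ (card S div 2) * prod y S * prod x ({1..n} - S))
        = \<sigma> ((-1) ^ (card S div 2)) * \<sigma> (prod y S) * \<sigma> (prod x ({1..n} - S))"
      using hmul[OF cYL Bm[OF XB]] hmul[OF Bm[OF cB] YS(1)] by simp
    also have "\<dots> = (-1) ^ (card S div 2) * prod y' S * prod x ({1..n} - S)"
      using fixB[OF cB] fixB[OF XB] YS(2) Y' by simp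
    finally show ?thesis using inL by simp
  qed
  have sE: "\<sigma> (EC x y {1..n}) = EC x y' {1..n}"
    unfolding EC_def
    by (subst hom_sum[OF hadd LG s0]) (use termL in auto)
  have nI: "{1..n} = insert n {1..n-1}" "n \<notin> {1..n-1}" using assms(1) by auto
  define A where "A = EC x y {1..n-1}"
  define Bo where "Bo = OC x y {1..n-1}"
  have cong: "\<forall>j\<in>{1..n-1}. y j = y' j" unfolding y'_def by auto
  have E: "EC x y {1..n} = A * x n - Bo * y n"
    unfolding A_def Bo_def nI(1) by (rule EC_insert[OF _ nI(2)]) simp
  have E': "\<sigma> (EC x y {1..n}) = A * x n + Bo * y n"
  proof -
    have "EC x y' {1..n} = EC x y' {1..n-1} * x n - OC x y' {1..n-1} * y' n"
      by (subst nI(1)) (rule EC_insert[OF _ nI(2)], simp)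
    then show ?thesis unfolding sE A_def Bo_def using EC_cong[OF cong, of x] by (simp add: y'_def fun_upd_def)
  qed
  have AB: "A^2 + Bo^2 = 1"
  proof -
    have "(\<Prod>j\<in>{1..n-1}. (x j)^2 + (y j)^2) = (\<Prod>j\<in>{1..n-1}. (1::'a))"
      using assms(3) by (intro prod.cong) auto
    then show ?thesis unfolding A_def Bo_def using EC_OC_sq[of "{1..n-1}" x y] by simp
  qed
  have yn: "(y n)^2 = 1 - (x n)^2" using assms(1,3) by auto
  have main: "(EC x y {1..n} - 1) * (\<sigma> (EC x y {1..n}) - 1) = (x n - A)\<^sup>2"
  proof -
    have "(EC x y {1..n} - 1) * (\<sigma> (EC x y {1..n}) - 1) = (A * x n - Bo * y n - 1) * (A * x n + Bo * y n - 1)"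
      by (subst E', subst E, rule refl)
    also have "\<dots> = (A * x n - 1)^2 - Bo^2 * (y n)^2"
      by (simp add: power2_eq_square algebra_simps)
    also have "\<dots> = (A * x n - 1)^2 - (1 - A^2) * (1 - (x n)^2)"
    proof -
      have "Bo^2 = 1 - A^2" using AB by (simp add: eq_diff_eq add.commute)
      then show ?thesis using yn by simp
    qed
    also have "\<dots> = (x n - A)^2" by (simp add: power2_eq_square algebra_simps)
    finally show ?thesis .
  qed
  show ?thesis
  proof
    show "(EC x y {1..n} - 1) * (\<sigma> (EC x y {1..n}) - 1) = (x n - EC x y {1..n - 1})\<^sup>2"
      using main unfolding A_def .
    show "EC x y {1..n} = 1 \<longrightarrow> x n = EC x y {1..n - 1}"
    proof
      assume "EC x y {1..n} = 1"
      then have "(x n - A)^2 = 0" using main by simp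
      then show "x n = EC x y {1..n - 1}" unfolding A_def by simp
    qed
  qed
qed

end
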